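(* Consider the constrained online prediction problem and the \texttt{BanditQ} policy described in the context, with horizon $T$ and constant parameter $V_t=V=\Theta(\sqrt{T})$. For each $T$ let $\mathcal{I}=\mathcal{I}_T\subseteq[T]$ be an interval of consecutive rounds such that $T^{3/4}=o(|\mathcal{I}|)$ as $T\to\infty$. Then for every $i\in\mathcal{P}$, \[\liminf_{|\mathcal{I}|\to\infty}\ \frac{1}{|\mathcal{I}|}\sum_{t\in\mathcal{I}} r_i(t)\,x_i(t)\ \ge\ \lambda_i .\]
   Context: There are $N$ users. On each round $t=1,2,\dots$ an online policy chooses a probability vector $\bm{x}(t)=(x_1(t),\dots,x_N(t))$ in the standard simplex $\Delta_N=\{\bm{x}\in\mathbb{R}^N_{\ge 0}:\sum_i x_i=1\}$; afterwards an adversarially chosen reward vector $\bm{r}(t)=(r_1(t),\dots,r_N(t))\in[0,1]^N$ is revealed (full information), and the policy may use all past reward vectors to choose $\bm{x}(t+1)$. A subset $\mathcal{P}\subseteq[N]$ of protected users is given, with target rates $\lambda_i\in[0,1]$, $i\in\mathcal{P}$, satisfying $\sum_{i\in\mathcal{P}}\lambda_i\le 1$; set $\lambda_i=0$ for $i\notin\mathcal{P}$. The feasible set of stationary actions is $\Omega=\{\bm{x}^*\in\Delta_N : r_i(t)x^*_i\ge\lambda_i \text{ for all } i\in\mathcal{P} \text{ and all rounds } t\}$, which is assumed nonempty. The \texttt{BanditQ} policy: for each $i\in\mathcal{P}$ maintain $Q_i(0)=0$ and $Q_i(t)=\max\big(0,\,Q_i(t-1)+\lambda_i-r_i(t)x_i(t)\big)$;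 for $i\notin\mathcal{P}$ set $Q_i(t)=0$ for all $t$. Given a non-negative parameter sequence $(V_t)_{t\ge1}$, define surrogate rewards $r'_i(t)=(Q_i(t-1)+V_t)\,r_i(t)$ for all $i\in[N]$. Starting from an arbitrary $\bm{x}(1)\in\Delta_N$, the policy updates by adaptive online gradient ascent: $\bm{x}(t+1)=\Pi_{\Delta_N}\Big(\bm{x}(t)+\bm{r}'(t)\big/\sqrt{2\sum_{\tau=1}^{t}\|\bm{r}'(\tau)\|_2^2}\Big)$, where $\Pi_{\Delta_N}$ denotes Euclidean projection onto $\Delta_N$. *)

theory Defs
  imports "HOL-Analysis.Analysis" "HOL-Library.Landau_Symbols"
begin

text \<open>Users are indexed by a finite type 'n; vectors in R^N are real^'n.\<close>

definition prob_simplex :: "(real^'n::finite) set" where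
  "prob_simplex = {x. (\<forall>i. 0 \<le> x$i) \<and> (\<Sum>i\<in>UNIV. x$i) = 1}"

text \<open>State of BanditQ after k updates: (x(k+1), Q(k), S(k)) where
  S(k) = sum over tau=1..k of the squared norm of r'(tau).
  r t is the reward vector revealed at round t (t >= 1); V is the constant parameter.\<close>

fun bq_state :: "(nat \<Rightarrow> real^'n::finite) \<Rightarrow> 'n set \<Rightarrow> ('n \<Rightarrow> real) \<Rightarrow> real
                 \<Rightarrow> real^'n \<Rightarrow> nat \<Rightarrow> (real^'n) \<times> (real^'n) \<times> real" where
  "bq_state r P lam V x1 0 = (x1, 0, 0)"
| "bq_state r P lam V x1 (Suc k) =
     (case bq_state r P lam V x1 k of (x, Q, S) \<Rightarrow>
        let t = Suc k;
            r' = (\<chi> i. (Q$i + V) * (r t)$i);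
            S' = S + (norm r')\<^sup>2;
            x' = closest_point prob_simplex (x + (1 / sqrt (2 * S')) *\<^sub>R r');
            Q' = (\<chi> i. if i \<in> P then max 0 (Q$i + lam i - (r t)$i * x$i) else 0)
        in (x', Q', S'))"

definition bq_x :: "(nat \<Rightarrow> real^'n::finite) \<Rightarrow> 'n set \<Rightarrow> ('n \<Rightarrow> real) \<Rightarrow> real
                 \<Rightarrow> real^'n \<Rightarrow> nat \<Rightarrow> real^'n" where
  "bq_x r P lam V x1 t = fst (bq_state r P lam V x1 (t - 1))"

end

theory Submission
  imports Defs
begin

lemma simplex_nonneg: "x \<in> prob_simplex \<Longrightarrow> 0 \<le> x $ j"
  by (simp add: prob_simplex_def)

lemma simplex_sum: "x \<in> prob_simplex \<Longrightarrow> (\<Sum>j\<in>UNIV. x $ j) = 1"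
  by (simp add: prob_simplex_def)

lemma simplex_le1: "x \<in> prob_simplex \<Longrightarrow> x $ j \<le> 1"
proof -
  assume x: "x \<in> prob_simplex"
  have "x $ j \<le> (\<Sum>j\<in>UNIV. x $ j)"
    by (rule member_le_sum) (auto simp: simplex_nonneg[OF x])
  then show ?thesis using simplex_sum[OF x] by simp
qed

lemma simplex_convex: "convex prob_simplex"
  unfolding convex_def prob_simplex_def
  by (auto simp: sum.distrib sum_distrib_left[symmetric])

lemma simplex_closed: "closed (prob_simplex :: (real^'n::finite) set)"
proof -
  have "prob_simplex = (\<Inter>j. {x::real^'n. 0 \<le> x $ j}) \<inter> {x. (\<Sum>j\<in>UNIV. x $ j) = 1}"
    unfolding prob_simplex_def by auto
  moreover have "closed {x::real^'n. (\<Sum>j\<in>UNIV. x $ j) = 1}"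
    by (intro closed_Collect_eq continuous_intros)
  moreover have "closed {x::real^'n. 0 \<le> x $ j}" for j
    by (intro closed_Collect_le continuous_intros)
  ultimately show ?thesis by (metis closed_INT closed_Int)
qed

lemma simplex_dist: "x \<in> prob_simplex \<Longrightarrow> y \<in> prob_simplex \<Longrightarrow> (norm (x - y))\<^sup>2 \<le> 2"
proof -
  assume x: "x \<in> prob_simplex" and y: "y \<in> prob_simplex"
  have "(norm (x - y))\<^sup>2 = (\<Sum>j\<in>UNIV. (x$j - y$j)^2)"
    unfolding power2_norm_eq_inner by (simp add: inner_vec_def power2_eq_square)
  also have "\<dots> \<le> (\<Sum>j\<in>UNIV. x$j + y$j)"
  proof (rule sum_mono)
    fix j
    have a: "0 \<le> x$j" "x$j \<le> 1" "0 \<le> y$j" "y$j \<le> 1"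
      using simplex_nonneg[OF x] simplex_le1[OF x] simplex_nonneg[OF y] simplex_le1[OF y] by auto
    then have "x$j * x$j \<le> x$j" "y$j * y$j \<le> y$j" by (auto intro: mult_left_le)
    moreover have "0 \<le> x$j * y$j" using a by simp
    moreover have "(x$j - y$j)^2 = x$j*x$j + y$j*y$j - 2 * (x$j * y$j)" by (simp add: power2_eq_square algebra_simps)
    ultimately show "(x$j - y$j)^2 \<le> x$j + y$j" by linarith
  qed
  also have "\<dots> = 2" using simplex_sum[OF x] simplex_sum[OF y] by (simp add: sum.distrib)
  finally show ?thesis .
qed

locale bq =
  fixes r :: "nat \<Rightarrow> real^'n::finite" and P :: "'n set" and lam :: "'n \<Rightarrow> real"
    and V :: real and x1 :: "real^'n" and xs :: "real^'n"
  assumes rew: "\<And>t j. 1 \<le> t \<Longrightarrow> 0 \<le> r t $ j \<and> r t $ j \<le> 1"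
    and lamr: "\<And>j. j \<in> P \<Longrightarrow> 0 \<le> lam j \<and> lam j \<le> 1"
    and Vnn: "0 \<le> V"
    and x1s: "x1 \<in> prob_simplex"
    and xss: "xs \<in> prob_simplex"
    and xsf: "\<And>j t. j \<in> P \<Longrightarrow> 1 \<le> t \<Longrightarrow> r t $ j * xs $ j \<ge> lam j"
begin

definition "X k = fst (bq_state r P lam V x1 k)"
definition "Qv k = fst (snd (bq_state r P lam V x1 k))"
definition "S k = snd (snd (bq_state r P lam V x1 k))"
definition "g k = (\<chi> j. (Qv k $ j + V) * r (Suc k) $ j)"

lemma rec0: "X 0 = x1" "Qv 0 = 0" "S 0 = 0"
  by (simp_all add: X_def Qv_def S_def)

lemma recS:
  "S (Suc k) = S k + (norm (g k))\<^sup>2"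
  "X (Suc k) = closest_point prob_simplex (X k + (1 / sqrt (2 * S (Suc k))) *\<^sub>R g k)"
  "Qv (Suc k) = (\<chi> j. if j \<in> P then max 0 (Qv k $ j + lam j - r (Suc k) $ j * X k $ j) else 0)"
proof -
  obtain x Q s where e: "bq_state r P lam V x1 k = (x, Q, s)" by (cases "bq_state r P lam V x1 k") auto
  show "S (Suc k) = S k + (norm (g k))\<^sup>2"
    "X (Suc k) = closest_point prob_simplex (X k + (1 / sqrt (2 * S (Suc k))) *\<^sub>R g k)"
    "Qv (Suc k) = (\<chi> j. if j \<in> P then max 0 (Qv k $ j + lam j - r (Suc k) $ j * X k $ j) else 0)"
  proof -
    have h: "X k = x" "Qv k = Q" "S k = s" by (simp_all add: X_def Qv_def S_def e)
    show "S (Suc k) = S k + (norm (g k))\<^sup>2"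
      "X (Suc k) = closest_point prob_simplex (X k + (1 / sqrt (2 * S (Suc k))) *\<^sub>R g k)"
      "Qv (Suc k) = (\<chi> j. if j \<in> P then max 0 (Qv k $ j + lam j - r (Suc k) $ j * X k $ j) else 0)"
      unfolding h by (simp_all add: X_def Qv_def S_def g_def e Let_def h)
  qed
qed

lemma X_in: "X k \<in> prob_simplex"
proof (induction k)
  case 0 then show ?case using x1s by (simp add: rec0)
next
  case (Suc k)
  have ne: "(prob_simplex :: (real^'n) set) \<noteq> {}" using x1s by auto
  show ?case unfolding recS(2) by (rule closest_point_in_set[OF simplex_closed ne])
qed

lemma Q_nonneg: "0 \<le> Qv k $ j"
  by (cases k) (auto simp: rec0 recS)

lemma Q_out: "j \<notin> P \<Longrightarrow> Qv k $ j = 0"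
  by (cases k) (auto simp: rec0 recS)

lemma S_nonneg: "0 \<le> S k"
  by (induction k) (auto simp: rec0 recS)

lemma S_mono: "S k \<le> S (Suc k)"
  by (simp add: recS)

lemma Q_step: "j \<in> P \<Longrightarrow> Qv (Suc k) $ j \<ge> Qv k $ j + lam j - r (Suc k) $ j * X k $ j"
  by (simp add: recS)

lemma interval_sum:
  assumes "a0 \<le> b" and "j \<in> P"
  shows "(\<Sum>t\<in>{Suc a0..b}. r t $ j * X (t - 1) $ j) \<ge> real (b - a0) * lam j - Qv b $ j + Qv a0 $ j"
  using assms(1)
proof (induction b rule: nat_induct_at_least)
  case base then show ?case by simp
next
  case (Suc n)
  have e: "{Suc a0..Suc n} = insert (Suc n) {Suc a0..n}" using Suc.hyps by auto
  have "(\<Sum>t\<in>{Suc a0..Suc n}. r t $ j * X (t - 1) $ j)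
     = r (Suc n) $ j * X n $ j + (\<Sum>t\<in>{Suc a0..n}. r t $ j * X (t - 1) $ j)"
    unfolding e by simp
  moreover have "real (Suc n - a0) = 1 + real (n - a0)" using Suc.hyps by auto
  ultimately show ?case using Suc.IH Q_step[OF assms(2), of n] by (simp add: algebra_simps)
qed


lemma drift:
  "(norm (Qv (Suc k)))\<^sup>2 \<le> (norm (Qv k))\<^sup>2 + 2 * (g k \<bullet> (xs - X k)) + 2 * V + real CARD('n)"
proof -
  let ?x = "X k" and ?Q = "Qv k" and ?r = "r (Suc k)"
  have xin: "?x \<in> prob_simplex" by (rule X_in)
  have rr: "0 \<le> ?r $ j" "?r $ j \<le> 1" for j using rew[of "Suc k" j] by auto
  have comp: "(Qv (Suc k) $ j)\<^sup>2 \<le> (?Q $ j)\<^sup>2 + 2 * (?Q $ j * ?r $ j * (xs $ j - ?x $ j)) + 1" for j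
  proof (cases "j \<in> P")
    case True
    define d where "d = lam j - ?r $ j * ?x $ j"
    have x01: "0 \<le> ?x $ j" "?x $ j \<le> 1" using simplex_nonneg[OF xin] simplex_le1[OF xin] by auto
    have "0 \<le> ?r $ j * ?x $ j" "?r $ j * ?x $ j \<le> 1"
      using rr[of j] x01 by (auto intro: mult_le_one)
    then have dd: "-1 \<le> d" "d \<le> 1" using lamr[OF True] unfolding d_def by auto
    have "d * d \<le> 1"
    proof (cases "0 \<le> d")
      case True then show ?thesis using dd by (auto intro: mult_le_one)
    next
      case False then have "d * d = (-d) * (-d)" by simp
      also have "\<dots> \<le> 1" using dd False by (intro mult_le_one) auto
      finally show ?thesis .
    qed
    have dle: "d \<le> ?r $ j * (xs $ j - ?x $ j)" using xsf[OF True, of "Suc k"] unfolding d_def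
      by (simp add: algebra_simps)
    have q0: "0 \<le> ?Q $ j" by (rule Q_nonneg)
    have "?Q $ j * d \<le> ?Q $ j * (?r $ j * (xs $ j - ?x $ j))" by (rule mult_left_mono[OF dle q0])
    have e: "Qv (Suc k) $ j = max 0 (?Q $ j + d)" using True by (simp add: recS d_def)
    have "(max 0 (?Q $ j + d))\<^sup>2 \<le> (?Q $ j + d)\<^sup>2" by (simp add: max_def)
    also have "\<dots> = (?Q $ j)\<^sup>2 + 2 * (?Q $ j * d) + d * d" by (simp add: power2_eq_square algebra_simps)
    finally show ?thesis unfolding e
      using \<open>d * d \<le> 1\<close> \<open>?Q $ j * d \<le> ?Q $ j * (?r $ j * (xs $ j - ?x $ j))\<close>
      by (simp add: algebra_simps)
  next
    case False then show ?thesis by (simp add: Q_out)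
  qed
  have nsq: "(norm v)\<^sup>2 = (\<Sum>j\<in>UNIV. (v $ j)\<^sup>2)" for v :: "real^'n"
    unfolding power2_norm_eq_inner by (simp add: inner_vec_def power2_eq_square)
  have s1: "(norm (Qv (Suc k)))\<^sup>2 \<le> (norm ?Q)\<^sup>2 + 2 * (\<Sum>j\<in>UNIV. ?Q $ j * ?r $ j * (xs $ j - ?x $ j)) + real CARD('n)"
    unfolding nsq using sum_mono[of UNIV, OF comp]
    by (simp add: sum.distrib sum_distrib_left)
  have ge: "(\<Sum>j\<in>UNIV. ?r $ j * (xs $ j - ?x $ j)) \<ge> -1"
  proof -
    have "(\<Sum>j\<in>UNIV. ?r $ j * (xs $ j - ?x $ j)) \<ge> (\<Sum>j\<in>UNIV. - ?x $ j)"
    proof (rule sum_mono)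
      fix j
      have "0 \<le> ?r $ j * xs $ j" using rr[of j] simplex_nonneg[OF xss, of j] by simp
      moreover have "?r $ j * ?x $ j \<le> ?x $ j" using rr[of j] simplex_nonneg[OF xin, of j]
        by (simp add: mult_left_le_one_le)
      ultimately show "- ?x $ j \<le> ?r $ j * (xs $ j - ?x $ j)" by (simp add: algebra_simps)
    qed
    then show ?thesis using simplex_sum[OF xin] by (simp add: sum_negf)
  qed
  have "V * (\<Sum>j\<in>UNIV. ?r $ j * (xs $ j - ?x $ j)) \<ge> V * (-1)"
    by (rule mult_left_mono[OF ge Vnn])
  moreover have "g k \<bullet> (xs - X k) = (\<Sum>j\<in>UNIV. ?Q $ j * ?r $ j * (xs $ j - ?x $ j)) + V * (\<Sum>j\<in>UNIV. ?r $ j * (xs $ j - ?x $ j))"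
    by (simp add: g_def inner_vec_def sum_distrib_left sum.distrib[symmetric] algebra_simps)
  ultimately show ?thesis using s1 by linarith
qed

lemma norm_step: "(norm (a + c *\<^sub>R b))\<^sup>2 = (norm a)\<^sup>2 + 2 * c * (b \<bullet> a) + c\<^sup>2 * (norm b)\<^sup>2"
  for a b :: "real^'n"
  unfolding power2_norm_eq_inner
  by (simp add: inner_add_left inner_add_right inner_commute algebra_simps power2_eq_square)

lemma ogd_step:
  "g k \<bullet> (xs - X k) \<le> sqrt (2 * S (Suc k)) / 2 * ((norm (X k - xs))\<^sup>2 - (norm (X (Suc k) - xs))\<^sup>2)
      + (1 / sqrt (2 * S (Suc k))) * (norm (g k))\<^sup>2 / 2"
proof (cases "S (Suc k) = 0")
  case True
  then have "S k + (norm (g k))\<^sup>2 = 0" using recS(1)[of k] by simp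
  moreover have "0 \<le> (norm (g k))\<^sup>2" by simp
  ultimately have "(norm (g k))\<^sup>2 = 0" using S_nonneg[of k] by linarith
  then have "g k = 0" by simp
  then show ?thesis using True by simp
next
  case False
  then have Sp: "S (Suc k) > 0" using S_nonneg[of "Suc k"] by simp
  define w where "w = sqrt (2 * S (Suc k))"
  have wp: "w > 0" using Sp unfolding w_def by simp
  define y where "y = X k + (1 / w) *\<^sub>R g k"
  have ne: "(prob_simplex :: (real^'n) set) \<noteq> {}" using x1s by auto
  have "dist (closest_point prob_simplex y) (closest_point prob_simplex xs) \<le> dist y xs"
    by (rule closest_point_lipschitz[OF simplex_convex simplex_closed ne])
  then have "norm (X (Suc k) - xs) \<le> norm (y - xs)"
    using closest_point_self[OF xss] by (simp add: recS(2) y_def w_def dist_norm)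
  then have "(norm (X (Suc k) - xs))\<^sup>2 \<le> (norm (y - xs))\<^sup>2" by (simp add: power_mono)
  also have "y - xs = (X k - xs) + (1 / w) *\<^sub>R g k" by (simp add: y_def)
  also have "(norm \<dots>)\<^sup>2 = (norm (X k - xs))\<^sup>2 + 2 * (1/w) * (g k \<bullet> (X k - xs)) + (1/w)\<^sup>2 * (norm (g k))\<^sup>2"
    by (rule norm_step)
  finally have h: "2 * (1/w) * (g k \<bullet> (xs - X k)) \<le> (norm (X k - xs))\<^sup>2 - (norm (X (Suc k) - xs))\<^sup>2 + (1/w)\<^sup>2 * (norm (g k))\<^sup>2"
    by (simp add: inner_diff_right algebra_simps)
  have "w / 2 * (2 * (1/w) * (g k \<bullet> (xs - X k))) \<le> w / 2 * ((norm (X k - xs))\<^sup>2 - (norm (X (Suc k) - xs))\<^sup>2 + (1/w)\<^sup>2 * (norm (g k))\<^sup>2)"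
    by (rule mult_left_mono[OF h]) (use wp in simp)
  moreover have "w / 2 * (2 * (1/w) * (g k \<bullet> (xs - X k))) = g k \<bullet> (xs - X k)" using wp by simp
  moreover have "w / 2 * ((norm (X k - xs))\<^sup>2 - (norm (X (Suc k) - xs))\<^sup>2 + (1/w)\<^sup>2 * (norm (g k))\<^sup>2)
     = w / 2 * ((norm (X k - xs))\<^sup>2 - (norm (X (Suc k) - xs))\<^sup>2) + (1/w) * (norm (g k))\<^sup>2 / 2"
    using wp by (simp add: power2_eq_square field_simps)
  ultimately show ?thesis unfolding w_def by simp
qed


definition "D k = (norm (X k - xs))\<^sup>2"

lemma D_bounds: "0 \<le> D k" "D k \<le> 2"
  unfolding D_def using simplex_dist[OF X_in xss] by auto

lemma abel:
  "(\<Sum>k<K. sqrt (2 * S (Suc k)) / 2 * (D k - D (Suc k))) \<le> sqrt (2 * S K) / 2 * (2 - D K)"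
proof (induction K)
  case 0 then show ?case by (simp add: rec0)
next
  case (Suc K)
  let ?W = "sqrt (2 * S K) / 2" and ?w = "sqrt (2 * S (Suc K)) / 2"
  have ww: "?W \<le> ?w" using S_mono[of K] S_nonneg[of K] by simp
  have "(?w - ?W) * D K \<le> (?w - ?W) * 2" by (rule mult_left_mono) (use ww D_bounds in auto)
  then show ?case using Suc.IH by (simp add: algebra_simps)
qed

lemma sum2:
  "(\<Sum>k<K. (1 / sqrt (2 * S (Suc k))) * (norm (g k))\<^sup>2 / 2) \<le> sqrt (2 * S K) / 2"
proof (induction K)
  case 0 then show ?case by (simp add: rec0)
next
  case (Suc K)
  define a where "a = sqrt (2 * S (Suc K))"
  define b where "b = sqrt (2 * S K)"
  have a2: "a\<^sup>2 = 2 * S (Suc K)" unfolding a_def using S_nonneg[of "Suc K"] by simp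
  have b2: "b\<^sup>2 = 2 * S K" unfolding b_def using S_nonneg[of K] by simp
  have ab: "0 \<le> b" "b \<le> a" unfolding a_def b_def using S_mono[of K] S_nonneg[of K] by auto
  have G: "(norm (g K))\<^sup>2 = (a\<^sup>2 - b\<^sup>2) / 2" using a2 b2 recS(1)[of K] by simp
  have "(1 / a) * (norm (g K))\<^sup>2 / 2 \<le> (a - b) / 2"
  proof (cases "a = 0")
    case True then show ?thesis using ab by simp
  next
    case False
    then have ap: "a > 0" using ab by simp
    have "(1 / a) * ((a\<^sup>2 - b\<^sup>2) / 2) / 2 = (a - b) * (a + b) / (4 * a)"
      using ap by (simp add: power2_eq_square field_simps)
    also have "\<dots> \<le> (a - b) * (2 * a) / (4 * a)"
      by (intro divide_right_mono mult_left_mono) (use ab in auto)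
    also have "\<dots> = (a - b) / 2" using ap by simp
    finally show ?thesis unfolding G .
  qed
  then show ?case using Suc.IH unfolding a_def b_def by simp
qed

lemma regret:
  "(\<Sum>k<K. g k \<bullet> (xs - X k)) \<le> 2 * sqrt (2 * S K)"
proof -
  have "(\<Sum>k<K. g k \<bullet> (xs - X k)) \<le> (\<Sum>k<K. sqrt (2 * S (Suc k)) / 2 * (D k - D (Suc k))
      + (1 / sqrt (2 * S (Suc k))) * (norm (g k))\<^sup>2 / 2)"
    by (rule sum_mono) (use ogd_step in \<open>simp add: D_def\<close>)
  also have "\<dots> \<le> sqrt (2 * S K) / 2 * (2 - D K) + sqrt (2 * S K) / 2"
    unfolding sum.distrib using abel sum2 by (rule add_mono)
  also have "\<dots> \<le> 2 * sqrt (2 * S K)"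
  proof -
    have "sqrt (2 * S K) / 2 * (2 - D K) \<le> sqrt (2 * S K) / 2 * 2"
      by (rule mult_left_mono) (use D_bounds S_nonneg in auto)
    then show ?thesis using real_sqrt_ge_zero[of "2 * S K"] S_nonneg[of K] by linarith
  qed
  finally show ?thesis .
qed

lemma phi_bound:
  "(norm (Qv K))\<^sup>2 \<le> 4 * sqrt (2 * S K) + real K * (2 * V + real CARD('n))"
proof -
  have "(norm (Qv K))\<^sup>2 \<le> 2 * (\<Sum>k<K. g k \<bullet> (xs - X k)) + real K * (2 * V + real CARD('n))"
  proof (induction K)
    case 0 then show ?case by (simp add: rec0)
  next
    case (Suc K) then show ?case using drift[of K] by (simp add: algebra_simps)
  qed
  then show ?thesis using regret[of K] by simp
qed

lemma S_bound:
  assumes "\<And>k j. k < K \<Longrightarrow> Qv k $ j \<le> M"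
  shows "S K \<le> real K * (real CARD('n) * (M + V)\<^sup>2)"
  using assms
proof (induction K)
  case 0 then show ?case by (simp add: rec0)
next
  case (Suc K)
  have "(norm (g K))\<^sup>2 = (\<Sum>j\<in>UNIV. ((Qv K $ j + V) * r (Suc K) $ j)\<^sup>2)"
    unfolding power2_norm_eq_inner by (simp add: inner_vec_def power2_eq_square g_def)
  also have "\<dots> \<le> (\<Sum>j\<in>(UNIV::'n set). (M + V)\<^sup>2)"
  proof (rule sum_mono)
    fix j
    have q: "0 \<le> Qv K $ j + V" using Q_nonneg[of K j] Vnn by simp
    have rr: "0 \<le> r (Suc K) $ j" "r (Suc K) $ j \<le> 1" using rew[of "Suc K" j] by auto
    have "(Qv K $ j + V) * r (Suc K) $ j \<le> Qv K $ j + V" using q rr by (simp add: mult_left_le)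
    also have "\<dots> \<le> M + V" using Suc.prems[of K j] by simp
    finally show "((Qv K $ j + V) * r (Suc K) $ j)\<^sup>2 \<le> (M + V)\<^sup>2"
      by (rule power_mono) (use q rr in simp)
  qed
  finally have "(norm (g K))\<^sup>2 \<le> real CARD('n) * (M + V)\<^sup>2" by simp
  moreover have "S K \<le> real K * (real CARD('n) * (M + V)\<^sup>2)" using Suc by simp
  ultimately show ?case by (simp add: recS algebra_simps)
qed

lemma quad: "(m::real) \<ge> 0 \<Longrightarrow> A \<ge> 0 \<Longrightarrow> B \<ge> 0 \<Longrightarrow> m\<^sup>2 \<le> A * m + B \<Longrightarrow> m \<le> A + sqrt B"
proof (rule ccontr)
  assume h: "m \<ge> 0" "A \<ge> 0" "B \<ge> 0" "m\<^sup>2 \<le> A * m + B" "\<not> m \<le> A + sqrt B"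
  then have "sqrt B < m" using real_sqrt_ge_zero[of B] by linarith
  have m0: "0 < m" using \<open>sqrt B < m\<close> real_sqrt_ge_zero[of B] h by linarith
  have "m * (A + sqrt B) < m * m" using h m0 by (intro mult_strict_left_mono) auto
  have "sqrt B * sqrt B \<le> m * sqrt B" using \<open>sqrt B < m\<close> h by (intro mult_right_mono) auto
  then have "B \<le> m * sqrt B" using h by simp
  have "A * m + B < m * m"
    using \<open>B \<le> m * sqrt B\<close> \<open>m * (A + sqrt B) < m * m\<close> by (simp add: algebra_simps)
  then show False using h by (simp add: power2_eq_square)
qed


lemma Q_bound:
  assumes kT: "k \<le> T"
  shows "Qv k $ j \<le> 4 * sqrt (2 * real T * real CARD('n))
     + sqrt (4 * sqrt (2 * real T * real CARD('n)) * V + real T * (2 * V + real CARD('n)))"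
proof -
  define N where "N = real CARD('n)"
  define F where "F = (\<lambda>p. Qv (fst p) $ snd p)"
  define Z where "Z = F ` ({..T} \<times> (UNIV::'n set))"
  have fin: "finite Z" "Z \<noteq> {}" unfolding Z_def by auto
  define M where "M = Max Z"
  have "M \<in> Z" using Max_in[OF fin] unfolding M_def .
  then obtain p0 where p0: "p0 \<in> {..T} \<times> (UNIV::'n set)" "F p0 = M"
    unfolding Z_def by (metis imageE)
  have hle: "Qv k' $ j' \<le> M" if "k' \<le> T" for k' j'
  proof -
    have "F (k', j') \<in> Z" unfolding Z_def using that by auto
    then show ?thesis using Max_ge[OF fin(1)] unfolding M_def F_def by auto
  qed
  define k0 where "k0 = fst p0"
  define j0 where "j0 = snd p0"
  have k0T: "k0 \<le> T" using p0 unfolding k0_def by auto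
  have Mq: "M = Qv k0 $ j0" using p0 unfolding k0_def j0_def F_def by simp
  have M0: "0 \<le> M" using Q_nonneg Mq by simp
  have V0: "0 \<le> V" by (rule Vnn)
  have N0: "0 \<le> N" unfolding N_def by simp
  have "M\<^sup>2 \<le> (norm (Qv k0))\<^sup>2"
  proof -
    have "\<bar>Qv k0 $ j0\<bar> \<le> norm (Qv k0)" by (rule component_le_norm_cart)
    then have "\<bar>Qv k0 $ j0\<bar>\<^sup>2 \<le> (norm (Qv k0))\<^sup>2" by (rule power_mono) simp
    then show ?thesis using Mq by simp
  qed
  also have "\<dots> \<le> 4 * sqrt (2 * S k0) + real k0 * (2 * V + N)" using phi_bound unfolding N_def .
  also have "\<dots> \<le> 4 * (sqrt (2 * real T * N) * (M + V)) + real T * (2 * V + N)"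
  proof (rule add_mono)
    have "S k0 \<le> real k0 * (N * (M + V)\<^sup>2)" unfolding N_def
      by (rule S_bound) (use k0T hle in auto)
    also have "\<dots> \<le> real T * (N * (M + V)\<^sup>2)"
      by (rule mult_right_mono) (use k0T N0 in auto)
    finally have "sqrt (2 * S k0) \<le> sqrt (2 * (real T * (N * (M + V)\<^sup>2)))" by simp
    also have "\<dots> = sqrt (2 * real T * N) * (M + V)"
      using M0 V0 by (simp add: real_sqrt_mult mult.assoc)
    finally show "4 * sqrt (2 * S k0) \<le> 4 * (sqrt (2 * real T * N) * (M + V))" by simp
    show "real k0 * (2 * V + N) \<le> real T * (2 * V + N)"
      by (rule mult_right_mono) (use k0T N0 V0 in auto)
  qed
  finally have Msq: "M\<^sup>2 \<le> (4 * sqrt (2 * real T * N)) * M + (4 * sqrt (2 * real T * N) * V + real T * (2 * V + N))"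
    by (simp add: algebra_simps)
  then have "M \<le> 4 * sqrt (2 * real T * N) + sqrt (4 * sqrt (2 * real T * N) * V + real T * (2 * V + N))"
  proof -
    have A0: "0 \<le> 4 * sqrt (2 * real T * N)" using N0 by simp
    have B0: "0 \<le> 4 * sqrt (2 * real T * N) * V + real T * (2 * V + N)" using N0 V0 by simp
    show ?thesis by (rule quad[OF M0 A0 B0 Msq])
  qed
  then show ?thesis using hle[OF kT, of j] unfolding N_def by linarith
qed


lemma avg_lower:
  assumes "1 \<le> a" "a \<le> b" "b \<le> T" "j \<in> P"
  shows "(\<Sum>t\<in>{a..b}. r t $ j * bq_x r P lam V x1 t $ j) \<ge> real (card {a..b}) * lam j
    - (4 * sqrt (2 * real T * real CARD('n))
     + sqrt (4 * sqrt (2 * real T * real CARD('n)) * V + real T * (2 * V + real CARD('n))))"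
proof -
  obtain a0 where a0: "a = Suc a0" using assms(1) by (cases a) auto
  have "(\<Sum>t\<in>{a..b}. r t $ j * bq_x r P lam V x1 t $ j) = (\<Sum>t\<in>{Suc a0..b}. r t $ j * X (t - 1) $ j)"
    unfolding a0 bq_x_def X_def by simp
  also have "\<dots> \<ge> real (b - a0) * lam j - Qv b $ j + Qv a0 $ j"
    by (rule interval_sum) (use assms a0 in auto)
  finally have h: "(\<Sum>t\<in>{a..b}. r t $ j * bq_x r P lam V x1 t $ j) \<ge> real (b - a0) * lam j - Qv b $ j + Qv a0 $ j" .
  have "card {a..b} = b - a0" using a0 by simp
  then show ?thesis using h Q_nonneg[of a0 j] Q_bound[OF assms(3), of j] by simp
qed

end

lemma powr34:
  assumes "1 \<le> (T::real)"
  shows "0 < T powr (3/4)" "(T powr (3/4))\<^sup>2 = T * sqrt T" "sqrt T \<le> T powr (3/4)"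
proof -
  show p0: "0 < T powr (3/4)" using assms by simp
  have "(T powr (3/4))\<^sup>2 = T powr (3/4) * T powr (3/4)" by (simp add: power2_eq_square)
  also have "\<dots> = T powr (3/4 + 3/4)" by (rule powr_add[symmetric])
  also have "(3/4 + 3/4 :: real) = 1 + 1/2" by simp
  also have "T powr (1 + 1/2) = T powr 1 * T powr (1/2)" by (rule powr_add)
  also have "\<dots> = T * sqrt T" using assms by (simp add: powr_half_sqrt)
  finally show e: "(T powr (3/4))\<^sup>2 = T * sqrt T" .
  have "(sqrt T)\<^sup>2 \<le> (T powr (3/4))\<^sup>2" unfolding e
  proof -
    have "1 \<le> sqrt T" using assms by simp
    then have "T * 1 \<le> T * sqrt T" using assms by (intro mult_left_mono) auto
    then show "(sqrt T)\<^sup>2 \<le> T * sqrt T" using assms by simp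
  qed
  then show "sqrt T \<le> T powr (3/4)" by (rule power2_le_imp_le) (use p0 in linarith)
qed

theorem proposition2:
  fixes r :: "nat \<Rightarrow> real^'n::finite"
    and P :: "'n set" and lam :: "'n \<Rightarrow> real"
    and V :: "nat \<Rightarrow> real" and x1 :: "nat \<Rightarrow> real^'n"
    and a b :: "nat \<Rightarrow> nat" and i :: 'n
  assumes rewards: "\<forall>t\<ge>1. \<forall>j. 0 \<le> r t $ j \<and> r t $ j \<le> 1"
    and lam_range: "\<forall>j\<in>P. 0 \<le> lam j \<and> lam j \<le> 1"
    and lam_sum: "(\<Sum>j\<in>P. lam j) \<le> 1"
    and lam_out: "\<forall>j. j \<notin> P \<longrightarrow> lam j = 0"
    and Omega_nonempty: "\<exists>xs\<in>prob_simplex. \<forall>j\<in>P. \<forall>t\<ge>1. r t $ j * xs $ j \<ge> lam j"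
    and V_nonneg: "\<forall>T. 0 \<le> V T"
    and V_Theta: "V \<in> \<Theta>(\<lambda>T. sqrt (real T))"
    and x1_simplex: "\<forall>T. x1 T \<in> prob_simplex"
    and interval: "\<forall>T. 1 \<le> a T \<and> b T \<le> T"
    and interval_len: "(\<lambda>T. real T powr (3/4)) \<in> o(\<lambda>T. real (card {a T..b T}))"
    and iP: "i \<in> P"
  shows "Liminf sequentially
           (\<lambda>T. ereal ((1 / real (card {a T..b T})) *
              (\<Sum>t\<in>{a T..b T}. r t $ i * bq_x r P lam (V T) (x1 T) t $ i)))
         \<ge> ereal (lam i)"
proof -
  obtain xs where xs: "xs \<in> prob_simplex" "\<And>j t. j \<in> P \<Longrightarrow> 1 \<le> t \<Longrightarrow> r t $ j * xs $ j \<ge> lam j"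
    using Omega_nonempty by auto
  define N where "N = real CARD('n)"
  define Bd where "Bd T = 4 * sqrt (2 * real T * N)
     + sqrt (4 * sqrt (2 * real T * N) * V T + real T * (2 * V T + N))" for T
  define avg where "avg T = (1 / real (card {a T..b T})) *
              (\<Sum>t\<in>{a T..b T}. r t $ i * bq_x r P lam (V T) (x1 T) t $ i)" for T
  have key: "(\<Sum>t\<in>{a T..b T}. r t $ i * bq_x r P lam (V T) (x1 T) t $ i) \<ge> real (card {a T..b T}) * lam i - Bd T"
    if "a T \<le> b T" for T
  proof -
    interpret bq r P lam "V T" "x1 T" xs
      by unfold_locales (use rewards lam_range V_nonneg x1_simplex xs in auto)
    show ?thesis unfolding Bd_def N_def
      by (rule avg_lower) (use interval that iP in auto)
  qed
  obtain c where c: "c > 0" "eventually (\<lambda>T. norm (V T) \<le> c * norm (sqrt (real T))) sequentially"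
    using bigthetaD1[OF V_Theta] by (elim landau_o.bigE) auto
  have N1: "1 \<le> N" unfolding N_def by simp
  define K where "K = 4 * sqrt (2 * N) * c + 2 * c + N"
  define C where "C = 4 * sqrt (2 * N) + sqrt K"
  have K0: "0 \<le> K" unfolding K_def using c N1 by simp
  have C0: "0 < C" unfolding C_def using N1 K0 by (simp add: add_pos_nonneg)
  have Bd_le: "Bd T \<le> C * real T powr (3/4)" if T1: "1 \<le> T" and VT: "V T \<le> c * sqrt (real T)" for T
  proof -
    define p where "p = real T powr (3/4)"
    define s where "s = sqrt (real T)"
    have T1': "1 \<le> real T" using T1 by simp
    have pp: "0 < p" "p\<^sup>2 = real T * s" "s \<le> p" using powr34[OF T1'] unfolding p_def s_def by auto
    have s1: "1 \<le> s" unfolding s_def using T1' by simp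
    have ss: "s * s = real T" unfolding s_def by simp
    have V0: "0 \<le> V T" using V_nonneg by simp
    have e1: "sqrt (2 * real T * N) = sqrt (2 * N) * s" unfolding s_def by (simp add: real_sqrt_mult)
    have "4 * sqrt (2 * real T * N) * V T = (4 * sqrt (2 * N) * s) * V T" unfolding e1 by simp
    also have "\<dots> \<le> (4 * sqrt (2 * N) * s) * (c * s)"
      by (rule mult_left_mono) (use VT N1 in \<open>auto simp: s_def\<close>)
    also have "\<dots> = 4 * sqrt (2 * N) * c * real T" using ss by (simp add: algebra_simps)
    also have "\<dots> \<le> 4 * sqrt (2 * N) * c * (real T * s)"
      using s1 c N1 mult_left_mono[OF s1, of "real T"] by (intro mult_left_mono) auto
    finally have b1: "4 * sqrt (2 * real T * N) * V T \<le> 4 * sqrt (2 * N) * c * p\<^sup>2" using pp by simp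
    have "real T * (2 * V T + N) \<le> real T * (2 * (c * s) + N * s)"
    proof (rule mult_left_mono)
      have Ns: "N \<le> N * s" using mult_left_mono[OF s1, of N] N1 by simp
      show "2 * V T + N \<le> 2 * (c * s) + N * s" using VT Ns unfolding s_def by linarith
    qed simp
    also have "\<dots> = (2 * c + N) * p\<^sup>2" using pp by (simp add: algebra_simps)
    finally have b2: "real T * (2 * V T + N) \<le> (2 * c + N) * p\<^sup>2" .
    have "sqrt (4 * sqrt (2 * real T * N) * V T + real T * (2 * V T + N)) \<le> sqrt (K * p\<^sup>2)"
      using b1 b2 unfolding K_def by (simp add: algebra_simps)
    also have "\<dots> = sqrt K * p" unfolding real_sqrt_mult using pp(1) by simp
    finally have b3: "sqrt (4 * sqrt (2 * real T * N) * V T + real T * (2 * V T + N)) \<le> sqrt K * p" .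
    have "4 * sqrt (2 * real T * N) \<le> 4 * sqrt (2 * N) * p" unfolding e1 using mult_left_mono[OF pp(3), of "sqrt (2 * N)"] N1 by simp
    then show ?thesis using b3 unfolding Bd_def C_def p_def by (simp add: algebra_simps)
  qed
  have ev: "eventually (\<lambda>T. ereal (lam i) - ereal e < ereal (avg T)) sequentially" if e0: "e > 0" for e
  proof -
    define d where "d = e / (2 * C)"
    have d0: "d > 0" unfolding d_def using e0 C0 by simp
    have ev1: "eventually (\<lambda>T. norm (real T powr (3/4)) \<le> d * norm (real (card {a T..b T}))) sequentially"
      using landau_o.smallD[OF interval_len d0] by simp
    show ?thesis
      using ev1 c(2) eventually_ge_at_top[of "1::nat"]
    proof eventually_elim
      case (elim T)
      have T1: "1 \<le> real T" using elim by simp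
      have VT: "V T \<le> c * sqrt (real T)" using elim(2) by simp
      have p0: "0 < real T powr (3/4)" using powr34(1)[OF T1] .
      define n where "n = real (card {a T..b T})"
      have pn: "real T powr (3/4) \<le> d * n" using elim(1) p0 unfolding n_def by simp
      have n0: "0 < n" using pn p0 d0 by (smt (verit) mult_nonneg_nonpos of_nat_0_le_iff n_def)
      then have ab: "a T \<le> b T" unfolding n_def by (cases "a T \<le> b T") auto
      have "Bd T \<le> C * real T powr (3/4)" using Bd_le[OF _ VT] elim(3) by simp
      also have "\<dots> \<le> C * (d * n)" using pn C0 by simp
      also have "\<dots> = e / 2 * n" unfolding d_def using C0 by simp
      finally have bd: "Bd T \<le> e / 2 * n" .
      have "avg T \<ge> (1 / n) * (n * lam i - Bd T)"
        unfolding avg_def n_def[symmetric] using key[OF ab] n0 unfolding n_def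
        by (intro mult_left_mono) auto
      also have "(1 / n) * (n * lam i - Bd T) = lam i - Bd T / n" using n0 by (simp add: field_simps)
      also have "Bd T / n \<le> e / 2" using bd n0 by (simp add: divide_le_eq)
      ultimately have "avg T \<ge> lam i - e / 2" by linarith
      then show ?case using e0 by simp
    qed
  qed
  have "ereal (lam i) \<le> Liminf sequentially (\<lambda>T. ereal (avg T))"
    unfolding le_Liminf_iff
  proof (intro allI impI)
    fix y assume y: "y < ereal (lam i)"
    show "eventually (\<lambda>T. y < ereal (avg T)) sequentially"
    proof (cases y)
      case (real z)
      then have "lam i - z > 0" using y by simp
      from ev[OF this] show ?thesis using real by simp
    next
      case PInf then show ?thesis using y by simp
    next
      case MInf then show ?thesis by simp
    qed
  qed
  then show ?thesis unfolding avg_def .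
qed

end
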